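(* Let $n\in\mathbb{N}$ with $n\geq2$. There exist a switched linear system $\{A_i\}_{i=1}^m\subseteq\mathbb{R}^{n\times n}$ and a cost function $c:\mathbb{R}^n\to\mathbb{R}_{\geq0}$ such that $\mathrm{JSR}(\{A_i\}_{i=1}^m)<1$, $c$ is $C^\infty$ on $\mathbb{R}^n$ and Lipschitz continuous on a neighborhood of the origin, and the associated optimal value function $J^\star$ and worst-case value function $J^\circ$ are each non-differentiable on a dense subset of $\mathbb{R}^n$. Furthermore, the matrices $A_i$ can be chosen to have rational entries.
   Context: A discrete-time switched linear system $\{A_i\}_{i=1}^m$ is $\xi(t+1)=A_{\sigma(t)}\xi(t)$, $t\in\mathbb{N}$, with switching signal $\sigma:\mathbb{N}\to\{1,\ldots,m\}$; $\xi(t,x,\sigma)$ denotes the solution at time $t$ with $\xi(0)=x$. The joint spectral radius $\mathrm{JSR}(\{A_i\})$ is the infimum of $r\geq0$ such that there is $C\geq0$ with $\lVert\xi(t)\rVert\leq Cr^t\lVert\xi(0)\rVert$ for all solutions and all $t$. Given a cost $c:\mathbb{R}^n\to\mathbb{R}_{\geq0}$, $J(x,\sigma)=\sum_{t=0}^\infty c(\xi(t,x,\sigma))$, $J^\star(x)=\inf_\sigma J(x,\sigma)$ (optimal value function) and $J^\circ(x)=\sup_\sigma J(x,\sigma)$ (worst-case value function). *)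

theory Defs
  imports "HOL-Analysis.Analysis" "HOL-Library.Extended_Nonnegative_Real"
begin

text \<open>A switched linear system with m modes is given by A :: nat => matrix,
  modes indexed 1..m. A switching signal is sigma :: nat => nat with values in 1..m.\<close>

definition switching_signal :: "nat \<Rightarrow> (nat \<Rightarrow> nat) \<Rightarrow> bool" where
  "switching_signal m \<sigma> \<longleftrightarrow> (\<forall>t. \<sigma> t \<in> {1..m})"

fun sol :: "(nat \<Rightarrow> real^'n^'n) \<Rightarrow> (nat \<Rightarrow> nat) \<Rightarrow> real^'n \<Rightarrow> nat \<Rightarrow> real^'n" where
  "sol A \<sigma> x 0 = x"
| "sol A \<sigma> x (Suc t) = A (\<sigma> t) *v sol A \<sigma> x t"

definition JSR :: "nat \<Rightarrow> (nat \<Rightarrow> real^'n^'n) \<Rightarrow> real" where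
  "JSR m A = Inf {r. r \<ge> 0 \<and> (\<exists>C\<ge>0. \<forall>\<sigma> x t. switching_signal m \<sigma> \<longrightarrow>
       norm (sol A \<sigma> x t) \<le> C * r ^ t * norm x)}"

definition cost :: "(nat \<Rightarrow> real^'n^'n) \<Rightarrow> (real^'n \<Rightarrow> real) \<Rightarrow> real^'n \<Rightarrow> (nat \<Rightarrow> nat) \<Rightarrow> ennreal" where
  "cost A c x \<sigma> = (\<Sum>t. ennreal (c (sol A \<sigma> x t)))"

definition Jopt :: "nat \<Rightarrow> (nat \<Rightarrow> real^'n^'n) \<Rightarrow> (real^'n \<Rightarrow> real) \<Rightarrow> real^'n \<Rightarrow> ennreal" where
  "Jopt m A c x = (INF \<sigma>\<in>{\<sigma>. switching_signal m \<sigma>}. cost A c x \<sigma>)"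

definition Jworst :: "nat \<Rightarrow> (nat \<Rightarrow> real^'n^'n) \<Rightarrow> (real^'n \<Rightarrow> real) \<Rightarrow> real^'n \<Rightarrow> ennreal" where
  "Jworst m A c x = (SUP \<sigma>\<in>{\<sigma>. switching_signal m \<sigma>}. cost A c x \<sigma>)"

text \<open>C-infinity: f is infinitely (Frechet) differentiable; D is gives the iterated
  partial derivative along the index list is, and each D is is differentiable with
  derivative v |-> sum_i v_i * D (i#is).\<close>
definition smooth_fun :: "(real^'n \<Rightarrow> real) \<Rightarrow> bool" where
  "smooth_fun f \<longleftrightarrow> (\<exists>D. D [] = f \<and>
     (\<forall>is x. (D is has_derivative (\<lambda>v. \<Sum>i\<in>UNIV. v $ i * D (i # is) x)) (at x)))"

end

theory Submission
  imports Defs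
begin
definition rho :: real where "rho = 1/2"
definition om :: complex where "om = Complex (3/5) (4/5)"
definition PP :: "'n \<Rightarrow> 'n \<Rightarrow> real^'n \<Rightarrow> complex" where "PP a b x = Complex (x$a) (x$b)"
definition emb :: "'n \<Rightarrow> 'n \<Rightarrow> complex \<Rightarrow> real^'n" where
  "emb a b z = (\<chi> i. if i = a then Re z else if i = b then Im z else 0)"
definition sgi :: "nat \<Rightarrow> real" where "sgi i = (if i = 1 then 1 else -1)"
definition Amat :: "'n \<Rightarrow> 'n \<Rightarrow> nat \<Rightarrow> real^'n^'n" where
  "Amat a b k = (\<chi> i j. sgi k * (if i = a then (if j = a then 3/10 else if j = b then -4/10 else 0)
      else if i = b then (if j = a then 4/10 else if j = b then 3/10 else 0) else 0))"
definition ccost :: "'n \<Rightarrow> 'n \<Rightarrow> real^'n \<Rightarrow> real" where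
  "ccost a b x = (x$a + (x$b)^2)^2"

lemma sum_two:
  fixes f :: "'n::finite \<Rightarrow> real"
  assumes "a \<noteq> b" "\<And>j. j \<noteq> a \<Longrightarrow> j \<noteq> b \<Longrightarrow> f j = 0"
  shows "sum f UNIV = f a + f b"
proof -
  have "sum f UNIV = sum f {a,b}"
    by (rule sum.mono_neutral_right) (use assms in auto)
  also have "\<dots> = f a + f b" using assms by simp
  finally show ?thesis .
qed

lemma PP_emb: "a \<noteq> b \<Longrightarrow> PP a b (emb a b z) = z"
  by (simp add: PP_def emb_def complex_eq_iff)

lemma PP_add: "PP a b (x + y) = PP a b x + PP a b y"
  by (simp add: PP_def complex_eq_iff)
lemma PP_diff: "PP a b (x - y) = PP a b x - PP a b y"
  by (simp add: PP_def complex_eq_iff)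
lemma PP_scale: "PP a b (h *\<^sub>R x) = complex_of_real h * PP a b x"
  by (simp add: PP_def complex_eq_iff)

lemma Amat_act:
  assumes "a \<noteq> b"
  shows "PP a b (Amat a b k *v x) = complex_of_real (sgi k * rho) * om * PP a b x"
    and "\<And>j. j \<noteq> a \<Longrightarrow> j \<noteq> b \<Longrightarrow> (Amat a b k *v x) $ j = 0"
proof -
  have ea: "(Amat a b k *v x) $ a = sgi k * (3/10 * x$a - 4/10 * x$b)"
    unfolding matrix_vector_mult_def Amat_def using assms
    by (subst sum_two[OF assms]) (auto simp: algebra_simps)
  have eb: "(Amat a b k *v x) $ b = sgi k * (4/10 * x$a + 3/10 * x$b)"
    unfolding matrix_vector_mult_def Amat_def using assms
    by (subst sum_two[OF assms]) (auto simp: algebra_simps)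
  show "PP a b (Amat a b k *v x) = complex_of_real (sgi k * rho) * om * PP a b x"
    by (simp add: PP_def ea eb om_def rho_def complex_eq_iff algebra_simps)
  show "\<And>j. j \<noteq> a \<Longrightarrow> j \<noteq> b \<Longrightarrow> (Amat a b k *v x) $ j = 0"
    unfolding matrix_vector_mult_def Amat_def by simp
qed

lemma norm_two:
  fixes w :: "real^'n"
  assumes "a \<noteq> b" "\<And>j. j \<noteq> a \<Longrightarrow> j \<noteq> b \<Longrightarrow> w $ j = 0"
  shows "norm w = cmod (PP a b w)"
proof -
  have "(norm w)^2 = (\<Sum>j\<in>UNIV. (w$j)^2)"
    by (simp only: power2_norm_eq_inner) (simp add: inner_vec_def power2_eq_square)
  also have "\<dots> = (w$a)^2 + (w$b)^2" by (rule sum_two) (use assms in auto)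
  also have "\<dots> = (cmod (PP a b w))^2" by (simp add: PP_def cmod_power2)
  finally show ?thesis by (simp add: power2_eq_iff_nonneg)
qed

lemma norm_PP_le: 
  fixes w :: "real^'n"
  assumes "a \<noteq> b" shows "cmod (PP a b w) \<le> norm w"
proof -
  have "(cmod (PP a b w))^2 = (\<Sum>j\<in>{a,b}. (w$j)^2)" using assms by (simp add: PP_def cmod_power2)
  also have "\<dots> \<le> (\<Sum>j\<in>UNIV. (w$j)^2)" by (rule sum_mono2) auto
  also have "\<dots> = (norm w)^2"
    by (simp only: power2_norm_eq_inner) (simp add: inner_vec_def power2_eq_square)
  finally show ?thesis by (simp add: power2_le_iff_abs_le)
qed

lemma norm_emb: assumes "a \<noteq> b" shows "norm (emb a b z) = cmod z"
proof -
  have "norm (emb a b z) = cmod (PP a b (emb a b z))" by (rule norm_two) (use assms in \<open>auto simp: emb_def\<close>)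
  then show ?thesis using PP_emb[OF assms] by simp
qed

lemma cmod_om: "cmod om = 1"
  by (simp add: om_def cmod_def power2_eq_square)

definition sg :: "(nat \<Rightarrow> nat) \<Rightarrow> nat \<Rightarrow> real" where "sg \<sigma> t = (\<Prod>j<t. sgi (\<sigma> j))"
definition ys :: "nat \<Rightarrow> complex \<Rightarrow> complex" where "ys t z = complex_of_real (rho^t) * om^t * z"
definition ccz :: "complex \<Rightarrow> real" where "ccz z = (Re z + (Im z)^2)^2"
definition evp :: "complex \<Rightarrow> real" where "evp z = (Re z)^2 + (Im z)^4"
definition odp :: "complex \<Rightarrow> real" where "odp z = 2 * Re z * (Im z)^2"

lemma sgi_pm: "sgi i = 1 \<or> sgi i = -1" by (simp add: sgi_def)
lemma sg_pm: "sg \<sigma> t = 1 \<or> sg \<sigma> t = -1"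
  by (induction t) (auto simp: sg_def sgi_def)

lemma sol_PP:
  assumes "a \<noteq> b"
  shows "PP a b (sol (Amat a b) \<sigma> x t) = complex_of_real (sg \<sigma> t) * ys t (PP a b x)"
proof (induction t)
  case 0 then show ?case by (simp add: sg_def ys_def)
next
  case (Suc t)
  have 1: "sg \<sigma> (Suc t) = sgi (\<sigma> t) * sg \<sigma> t" by (simp add: sg_def)
  have 2: "ys (Suc t) z = complex_of_real rho * om * ys t z" for z by (simp add: ys_def)
  show ?case using Suc by (simp only: sol.simps Amat_act[OF assms] 1 2 of_real_mult mult_ac)
qed

lemma sol_zero_other:
  assumes "a \<noteq> b" "j \<noteq> a" "j \<noteq> b"
  shows "sol (Amat a b) \<sigma> x (Suc t) $ j = 0"
  using Amat_act(2)[OF assms(1) assms(2,3)] by simp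

lemma cmod_ys: "cmod (ys t z) = rho^t * cmod z"
  by (simp add: ys_def norm_mult norm_power cmod_om rho_def)

lemma norm_sol_le:
  assumes "a \<noteq> b"
  shows "norm (sol (Amat a b) \<sigma> x t) \<le> rho^t * norm x"
proof (cases t)
  case 0 then show ?thesis by simp
next
  case (Suc t')
  have "norm (sol (Amat a b) \<sigma> x t) = cmod (PP a b (sol (Amat a b) \<sigma> x t))"
    using Suc by (intro norm_two[OF assms]) (use sol_zero_other[OF assms] in auto)
  also have "\<dots> = rho^t * cmod (PP a b x)"
    using sg_pm[of \<sigma> t] by (auto simp: sol_PP[OF assms] norm_mult cmod_ys)
  also have "\<dots> \<le> rho^t * norm x"
    by (rule mult_left_mono) (auto simp: norm_PP_le[OF assms] rho_def)
  finally show ?thesis .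
qed

lemma JSR_lt:
  assumes "a \<noteq> b"
  shows "JSR 2 (Amat a b) < 1"
proof -
  let ?S = "{r. r \<ge> 0 \<and> (\<exists>C\<ge>0. \<forall>\<sigma> x t. switching_signal 2 \<sigma> \<longrightarrow>
       norm (sol (Amat a b) \<sigma> x t) \<le> C * r ^ t * norm x)}"
  have "rho \<in> ?S"
    using norm_sol_le[OF assms] by (auto simp: rho_def intro!: exI[of _ 1])
  moreover have "bdd_below ?S" by (rule bdd_belowI[of _ 0]) auto
  ultimately have "Inf ?S \<le> rho" by (rule cInf_lower)
  then show ?thesis unfolding JSR_def rho_def by simp
qed

lemma ccz_sign:
  assumes "s = 1 \<or> s = -1"
  shows "ccz (complex_of_real s * z) = evp z + s * odp z"
proof -
  have "(p + q^2)^2 = p^2 + q^4 + 2*p*q^2" for p q :: real by algebra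
  moreover have "(-p + q^2)^2 = p^2 + q^4 - 2*p*q^2" for p q :: real by algebra
  ultimately show ?thesis using assms by (auto simp: ccz_def evp_def odp_def)
qed

lemma ccost_sol:
  assumes "a \<noteq> b"
  shows "ccost a b (sol (Amat a b) \<sigma> x t) = evp (ys t (PP a b x)) + sg \<sigma> t * odp (ys t (PP a b x))"
proof -
  have "ccost a b (sol (Amat a b) \<sigma> x t) = ccz (PP a b (sol (Amat a b) \<sigma> x t))"
    by (simp add: ccost_def ccz_def PP_def)
  then show ?thesis by (simp add: sol_PP[OF assms] ccz_sign[OF sg_pm])
qed

lemma abs_odp_le: "\<bar>odp z\<bar> \<le> evp z"
proof -
  have "2*p*q \<le> p^2 + q^2" for p q :: real
    using power2_diff[of p q] zero_le_power2[of "p - q"] by linarith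
  from this[of "\<bar>Re z\<bar>" "(Im z)^2"] show ?thesis unfolding odp_def evp_def
    by (simp add: abs_mult power2_abs flip: power_mult)
qed

lemma evp_le: "evp z \<le> (cmod z)^2 + (cmod z)^4"
proof -
  have "(Re z)^2 \<le> (cmod z)^2" by (simp add: abs_Re_le_cmod power2_le_iff_abs_le)
  moreover have "(Im z)^4 \<le> (cmod z)^4"
    using power_mono[OF abs_Im_le_cmod abs_ge_zero, of z 4] by (simp add: power_even_abs)
  ultimately show ?thesis by (simp add: evp_def)
qed

lemma evp_nonneg: "0 \<le> evp z" by (simp add: evp_def)

definition gW :: "nat \<Rightarrow> complex \<Rightarrow> real" where
  "gW t z = evp (ys t z) + (if t = 0 then odp (ys t z) else \<bar>odp (ys t z)\<bar>)"
definition gO :: "nat \<Rightarrow> complex \<Rightarrow> real" where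
  "gO t z = evp (ys t z) + (if t = 0 then odp (ys t z) else - \<bar>odp (ys t z)\<bar>)"
definition FW :: "complex \<Rightarrow> real" where "FW z = (\<Sum>t. gW t z)"
definition FO :: "complex \<Rightarrow> real" where "FO z = (\<Sum>t. gO t z)"

lemma gO_nonneg: "0 \<le> gO t z"
  using abs_odp_le[of "ys t z"] by (auto simp: gO_def)
lemma gW_nonneg: "0 \<le> gW t z"
  using abs_odp_le[of "ys t z"] by (auto simp: gW_def)

lemma gW_le: "gW t z \<le> 2 * ((cmod z)^2 * (rho^2)^t + (cmod z)^4 * (rho^4)^t)"
proof -
  have "gW t z \<le> 2 * evp (ys t z)" using abs_odp_le[of "ys t z"] by (auto simp: gW_def)
  also have "\<dots> \<le> 2 * ((cmod (ys t z))^2 + (cmod (ys t z))^4)" by (intro mult_left_mono evp_le) simp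
  also have "\<dots> = 2 * ((cmod z)^2 * (rho^2)^t + (cmod z)^4 * (rho^4)^t)"
    by (simp add: cmod_ys power_mult_distrib power_mult[symmetric] mult.commute)
  finally show ?thesis .
qed

lemma gO_le: "gO t z \<le> gW t z" by (auto simp: gO_def gW_def)

lemma summable_bound: "summable (\<lambda>t. 2 * ((cmod z)^2 * (rho^2)^t + (cmod z)^4 * (rho^4)^t))"
  by (intro summable_mult summable_add summable_geometric) (auto simp: rho_def eval_nat_numeral)

lemma summable_gW: "summable (\<lambda>t. gW t z)"
  by (rule summable_comparison_test[OF _ summable_bound[of z]]) (use gW_le gW_nonneg in auto)
lemma summable_gO: "summable (\<lambda>t. gO t z)"
  by (rule summable_comparison_test[OF _ summable_gW[of z]]) (use gO_le gO_nonneg in auto)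

lemma signal_exists:
  assumes "d 0 = 1" "\<And>t. d t = 1 \<or> d t = -1"
  shows "\<exists>\<sigma>. switching_signal 2 \<sigma> \<and> (\<forall>t. sg \<sigma> t = d t)"
proof -
  define \<sigma> where "\<sigma> t = (if d (Suc t) = d t then 1 else 2::nat)" for t
  have "sg \<sigma> t = d t" for t
  proof (induction t)
    case 0 then show ?case using assms by (simp add: sg_def)
  next
    case (Suc t)
    have h: "sg \<sigma> (Suc t) = sgi (\<sigma> t) * sg \<sigma> t" by (simp add: sg_def)
    have h2: "sgi (\<sigma> t) = (if d (Suc t) = d t then 1 else -1)" by (simp add: \<sigma>_def sgi_def)
    show ?case using Suc assms(2)[of t] assms(2)[of "Suc t"] unfolding h h2
      by auto
  qed
  moreover have "switching_signal 2 \<sigma>" by (auto simp: switching_signal_def \<sigma>_def)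
  ultimately show ?thesis by blast
qed

lemma cost_eq:
  assumes "a \<noteq> b"
  shows "cost (Amat a b) (ccost a b) x \<sigma> =
    (\<Sum>t. ennreal (evp (ys t (PP a b x)) + sg \<sigma> t * odp (ys t (PP a b x))))"
  unfolding cost_def ccost_sol[OF assms] ..

lemma sg0: "sg \<sigma> 0 = 1" by (simp add: sg_def)

lemma Jworst_eq:
  assumes "a \<noteq> b"
  shows "Jworst 2 (Amat a b) (ccost a b) x = ennreal (FW (PP a b x))"
proof -
  let ?z = "PP a b x"
  have FWe: "ennreal (FW ?z) = (\<Sum>t. ennreal (gW t ?z))"
    unfolding FW_def by (rule suminf_ennreal2[symmetric]) (auto simp: gW_nonneg summable_gW)
  have le: "cost (Amat a b) (ccost a b) x \<sigma> \<le> ennreal (FW ?z)" for \<sigma>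
  proof -
    have "evp (ys t ?z) + sg \<sigma> t * odp (ys t ?z) \<le> gW t ?z" for t
      using sg_pm[of \<sigma> t] sg0[of \<sigma>] by (cases "t = 0") (auto simp: gW_def)
    then show ?thesis unfolding cost_eq[OF assms] FWe
      by (intro suminf_le ennreal_leI) auto
  qed
  define d where "d t = (if t = 0 then 1 else if odp (ys t ?z) \<ge> 0 then 1 else -1::real)" for t
  obtain \<sigma> where \<sigma>: "switching_signal 2 \<sigma>" "\<And>t. sg \<sigma> t = d t"
  proof -
    have "d 0 = 1" "\<And>t. d t = 1 \<or> d t = -1" by (auto simp: d_def)
    then show ?thesis using that signal_exists[of d] by blast
  qed
  have "evp (ys t ?z) + sg \<sigma> t * odp (ys t ?z) = gW t ?z" for t
    by (auto simp: \<sigma>(2) d_def gW_def)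
  then have eq: "cost (Amat a b) (ccost a b) x \<sigma> = ennreal (FW ?z)"
    unfolding cost_eq[OF assms] FWe by simp
  show ?thesis unfolding Jworst_def
  proof (rule antisym)
    show "(SUP \<sigma>\<in>{\<sigma>. switching_signal 2 \<sigma>}. cost (Amat a b) (ccost a b) x \<sigma>) \<le> ennreal (FW ?z)"
      by (rule SUP_least) (use le in auto)
    show "ennreal (FW ?z) \<le> (SUP \<sigma>\<in>{\<sigma>. switching_signal 2 \<sigma>}. cost (Amat a b) (ccost a b) x \<sigma>)"
      using \<sigma>(1) eq by (metis SUP_upper mem_Collect_eq)
  qed
qed

lemma Jopt_eq:
  assumes "a \<noteq> b"
  shows "Jopt 2 (Amat a b) (ccost a b) x = ennreal (FO (PP a b x))"
proof -
  let ?z = "PP a b x"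
  have FOe: "ennreal (FO ?z) = (\<Sum>t. ennreal (gO t ?z))"
    unfolding FO_def by (rule suminf_ennreal2[symmetric]) (auto simp: gO_nonneg summable_gO)
  have ge: "ennreal (FO ?z) \<le> cost (Amat a b) (ccost a b) x \<sigma>" for \<sigma>
  proof -
    have "gO t ?z \<le> evp (ys t ?z) + sg \<sigma> t * odp (ys t ?z)" for t
      using sg_pm[of \<sigma> t] sg0[of \<sigma>] by (cases "t = 0") (auto simp: gO_def)
    then show ?thesis unfolding cost_eq[OF assms] FOe
      by (intro suminf_le ennreal_leI) auto
  qed
  define d where "d t = (if t = 0 then 1 else if odp (ys t ?z) \<ge> 0 then -1 else 1::real)" for t
  obtain \<sigma> where \<sigma>: "switching_signal 2 \<sigma>" "\<And>t. sg \<sigma> t = d t"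
  proof -
    have "d 0 = 1" "\<And>t. d t = 1 \<or> d t = -1" by (auto simp: d_def)
    then show ?thesis using that signal_exists[of d] by blast
  qed
  have "evp (ys t ?z) + sg \<sigma> t * odp (ys t ?z) = gO t ?z" for t
    by (auto simp: \<sigma>(2) d_def gO_def)
  then have eq: "cost (Amat a b) (ccost a b) x \<sigma> = ennreal (FO ?z)"
    unfolding cost_eq[OF assms] FOe by simp
  show ?thesis unfolding Jopt_def
  proof (rule antisym)
    show "(INF \<sigma>\<in>{\<sigma>. switching_signal 2 \<sigma>}. cost (Amat a b) (ccost a b) x \<sigma>) \<le> ennreal (FO ?z)"
      using \<sigma>(1) eq by (metis INF_lower mem_Collect_eq)
    show "ennreal (FO ?z) \<le> (INF \<sigma>\<in>{\<sigma>. switching_signal 2 \<sigma>}. cost (Amat a b) (ccost a b) x \<sigma>)"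
      by (rule INF_greatest) (use ge in auto)
  qed
qed

lemma FW_nonneg: "0 \<le> FW z" unfolding FW_def by (intro suminf_nonneg summable_gW gW_nonneg)
lemma FO_nonneg: "0 \<le> FO z" unfolding FO_def by (intro suminf_nonneg summable_gO gO_nonneg)

fun ff :: "nat \<Rightarrow> nat \<Rightarrow> real" where
  "ff \<alpha> 0 = 1"
| "ff \<alpha> (Suc i) = ff \<alpha> i * (real \<alpha> - real i)"

lemma ff_zero: "\<alpha> < i \<Longrightarrow> ff \<alpha> i = 0"
proof (induction i)
  case 0 then show ?case by simp
next
  case (Suc i)
  then show ?case by (cases "\<alpha> < i") auto
qed

lemma ff_step: "ff \<alpha> i * real (\<alpha> - i) = ff \<alpha> (Suc i)"
proof (cases "i \<le> \<alpha>")
  case True then show ?thesis by (simp add: of_nat_diff)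
next
  case False then show ?thesis by (simp add: ff_zero)
qed

definition mon :: "nat \<Rightarrow> nat \<Rightarrow> nat \<Rightarrow> nat \<Rightarrow> real \<Rightarrow> real \<Rightarrow> real" where
  "mon \<alpha> \<beta> i j u v = ff \<alpha> i * ff \<beta> j * (u^(\<alpha> - i) * v^(\<beta> - j))"

lemma hd_nth: "((\<lambda>x::real^'n. x$i) has_derivative (\<lambda>h. h$i)) (at x)"
  by (rule bounded_linear_imp_has_derivative) (rule bounded_linear_vec_nth)

lemma mon_deriv:
  fixes x :: "real^'n" and a b :: 'n
  shows "((\<lambda>x::real^'n. mon \<alpha> \<beta> i j (x$a) (x$b)) has_derivative
     (\<lambda>h. h$a * mon \<alpha> \<beta> (Suc i) j (x$a) (x$b) + h$b * mon \<alpha> \<beta> i (Suc j) (x$a) (x$b))) (at x)"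
proof -
  let ?c = "ff \<alpha> i * ff \<beta> j"
  have "((\<lambda>x::real^'n. ?c * ((x$a)^(\<alpha>-i) * (x$b)^(\<beta>-j))) has_derivative
     (\<lambda>h. ?c * ((x$a)^(\<alpha>-i) * (of_nat (\<beta>-j) * h$b * (x$b)^(\<beta>-j-1)) +
                (of_nat (\<alpha>-i) * h$a * (x$a)^(\<alpha>-i-1)) * (x$b)^(\<beta>-j)))) (at x)"
    by (rule has_derivative_mult_right, rule has_derivative_mult;
        rule has_derivative_power[OF hd_nth])
  moreover have "(\<lambda>h. ?c * ((x$a)^(\<alpha>-i) * (of_nat (\<beta>-j) * h$b * (x$b)^(\<beta>-j-1)) +
                (of_nat (\<alpha>-i) * h$a * (x$a)^(\<alpha>-i-1)) * (x$b)^(\<beta>-j))) =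
     (\<lambda>h. h$a * mon \<alpha> \<beta> (Suc i) j (x$a) (x$b) + h$b * mon \<alpha> \<beta> i (Suc j) (x$a) (x$b))"
  proof
    fix h :: "real^'n"
    have 1: "ff \<alpha> (Suc i) = ff \<alpha> i * real (\<alpha> - i)" "ff \<beta> (Suc j) = ff \<beta> j * real (\<beta> - j)"
      by (simp_all only: ff_step)
    have 2: "\<alpha> - Suc i = \<alpha> - i - 1" "\<beta> - Suc j = \<beta> - j - 1" by simp_all
    show "?c * ((x$a)^(\<alpha>-i) * (of_nat (\<beta>-j) * h$b * (x$b)^(\<beta>-j-1)) +
                (of_nat (\<alpha>-i) * h$a * (x$a)^(\<alpha>-i-1)) * (x$b)^(\<beta>-j)) =
       h$a * mon \<alpha> \<beta> (Suc i) j (x$a) (x$b) + h$b * mon \<alpha> \<beta> i (Suc j) (x$a) (x$b)"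
      unfolding mon_def 1 2 by (simp add: algebra_simps)
  qed
  ultimately show ?thesis unfolding mon_def by simp
qed

definition pp :: "nat \<Rightarrow> nat \<Rightarrow> real \<Rightarrow> real \<Rightarrow> real" where
  "pp i j u v = mon 2 0 i j u v + 2 * mon 1 2 i j u v + mon 0 4 i j u v"

lemma pp_deriv:
  fixes x :: "real^'n" and a b :: 'n
  shows "((\<lambda>x::real^'n. pp i j (x$a) (x$b)) has_derivative
     (\<lambda>h. h$a * pp (Suc i) j (x$a) (x$b) + h$b * pp i (Suc j) (x$a) (x$b))) (at x)"
proof -
  have "((\<lambda>x::real^'n. pp i j (x$a) (x$b)) has_derivative
     (\<lambda>h. (h$a * mon 2 0 (Suc i) j (x$a) (x$b) + h$b * mon 2 0 i (Suc j) (x$a) (x$b)) +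
          2 * (h$a * mon 1 2 (Suc i) j (x$a) (x$b) + h$b * mon 1 2 i (Suc j) (x$a) (x$b)) +
          (h$a * mon 0 4 (Suc i) j (x$a) (x$b) + h$b * mon 0 4 i (Suc j) (x$a) (x$b)))) (at x)"
    unfolding pp_def by (intro has_derivative_add has_derivative_mult_right mon_deriv)
  then show ?thesis by (simp add: pp_def algebra_simps)
qed

lemma smooth_ccost:
  fixes a b :: "'n::finite"
  assumes "a \<noteq> b"
  shows "smooth_fun (ccost a b)"
proof -
  define D where "D is x = (if set is \<subseteq> {a,b} then pp (count_list is a) (count_list is b) (x$a) (x$b) else 0)"
    for "is" and x :: "real^'n"
  have D0: "D [] = ccost a b"
    by (rule ext) (simp add: D_def pp_def mon_def ccost_def power2_eq_square power4_eq_xxxx algebra_simps)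
  have "(D is has_derivative (\<lambda>v. \<Sum>i\<in>UNIV. v $ i * D (i # is) x)) (at x)" for "is" x
  proof (cases "set is \<subseteq> {a,b}")
    case True
    have s: "(\<Sum>i\<in>UNIV. v $ i * D (i # is) x) =
        v$a * pp (Suc (count_list is a)) (count_list is b) (x$a) (x$b) +
        v$b * pp (count_list is a) (Suc (count_list is b)) (x$a) (x$b)" for v
    proof -
      have "(\<Sum>i\<in>UNIV. v $ i * D (i # is) x) = v $ a * D (a # is) x + v $ b * D (b # is) x"
        by (rule sum_two[OF assms]) (simp add: D_def)
      then show ?thesis using True assms by (simp add: D_def)
    qed
    have "D is = (\<lambda>x. pp (count_list is a) (count_list is b) (x$a) (x$b))"
      using True by (simp add: D_def fun_eq_iff)
    then show ?thesis unfolding s using pp_deriv by simp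
  next
    case False
    then have "D is = (\<lambda>x. 0)" "\<And>i. D (i # is) = (\<lambda>x. 0)" by (auto simp: D_def fun_eq_iff)
    then show ?thesis by simp
  qed
  then show ?thesis unfolding smooth_fun_def using D0 by blast
qed

lemma lipschitz_ccost:
  fixes a b :: "'n::finite"
  assumes "a \<noteq> b"
  shows "12-lipschitz_on (ball 0 1) (ccost a b)"
proof (rule lipschitz_onI)
  fix x y :: "real^'n" assume x: "x \<in> ball 0 1" and y: "y \<in> ball 0 1"
  have nx: "norm x < 1" and ny: "norm y < 1" using x y by auto
  have xa: "\<bar>x$a\<bar> < 1" "\<bar>x$b\<bar> < 1" "\<bar>y$a\<bar> < 1" "\<bar>y$b\<bar> < 1"
    using component_le_norm_cart[of x] component_le_norm_cart[of y] nx ny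
    by (meson le_less_trans)+
  have da: "\<bar>x$a - y$a\<bar> \<le> dist x y" "\<bar>x$b - y$b\<bar> \<le> dist x y"
    using component_le_norm_cart[of "x - y"] by (auto simp: dist_norm)
  define p where "p = x$a + (x$b)^2"
  define q where "q = y$a + (y$b)^2"
  have "ccost a b x - ccost a b y = (p - q) * (p + q)"
    by (simp add: ccost_def p_def q_def power2_eq_square algebra_simps)
  moreover have "\<bar>p + q\<bar> \<le> 4"
  proof -
    have "(x$b)^2 \<le> 1" "(y$b)^2 \<le> 1" using xa by (simp_all add: abs_square_le_1)
    moreover have "0 \<le> (x$b)^2" "0 \<le> (y$b)^2" by simp_all
    moreover have "-1 < x$a" "-1 < y$a" "x$a < 1" "y$a < 1" using xa by auto
    ultimately show ?thesis unfolding p_def q_def abs_le_iff by linarith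
  qed
  moreover have "\<bar>p - q\<bar> \<le> 3 * dist x y"
  proof -
    have "p - q = (x$a - y$a) + (x$b - y$b) * (x$b + y$b)"
      by (simp add: p_def q_def power2_eq_square algebra_simps)
    then have "\<bar>p - q\<bar> \<le> \<bar>x$a - y$a\<bar> + \<bar>x$b - y$b\<bar> * \<bar>x$b + y$b\<bar>"
      by (simp add: abs_mult abs_triangle_ineq[THEN order_trans])
    moreover have "\<bar>x$b - y$b\<bar> * \<bar>x$b + y$b\<bar> \<le> dist x y * 2"
      by (rule mult_mono) (use da xa in auto)
    ultimately show ?thesis using da by linarith
  qed
  ultimately have "\<bar>ccost a b x - ccost a b y\<bar> \<le> 3 * dist x y * 4"
  proof -
    assume h: "ccost a b x - ccost a b y = (p - q) * (p + q)" "\<bar>p + q\<bar> \<le> 4" "\<bar>p - q\<bar> \<le> 3 * dist x y"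
    have "\<bar>p - q\<bar> * \<bar>p + q\<bar> \<le> (3 * dist x y) * 4"
      by (rule mult_mono) (use h in auto)
    then show ?thesis using h(1) by (simp add: abs_mult)
  qed
  then show "dist (ccost a b x) (ccost a b y) \<le> 12 * dist x y" by (simp add: dist_real_def)
qed simp

lemma evp2_eq:
  "evp (z + complex_of_real h * w) + evp (z - complex_of_real h * w) - 2 * evp z =
   2*h^2*(Re w)^2 + 12*h^2*(Im z)^2*(Im w)^2 + 2*h^4*(Im w)^4"
  by (simp add: evp_def power2_eq_square power4_eq_xxxx algebra_simps)

lemma odp2_eq:
  "odp (z + complex_of_real h * w) + odp (z - complex_of_real h * w) - 2 * odp z =
   4*h^2*(Re z * (Im w)^2 + 2 * Re w * Im z * Im w)"
  by (simp add: odp_def power2_eq_square algebra_simps)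

lemma evp2_bounds:
  assumes "\<bar>h\<bar> \<le> 1"
  shows "0 \<le> evp (z + complex_of_real h * w) + evp (z - complex_of_real h * w) - 2 * evp z"
    and "evp (z + complex_of_real h * w) + evp (z - complex_of_real h * w) - 2 * evp z
         \<le> h^2 * (2*(cmod w)^2 + 12*(cmod z)^2*(cmod w)^2 + 2*(cmod w)^4)"
proof -
  show "0 \<le> evp (z + complex_of_real h * w) + evp (z - complex_of_real h * w) - 2 * evp z"
    unfolding evp2_eq by (intro add_nonneg_nonneg) (simp_all add: zero_le_even_power)
  have r: "(Re w)^2 \<le> (cmod w)^2" "(Im w)^2 \<le> (cmod w)^2" "(Im z)^2 \<le> (cmod z)^2"
    by (simp_all add: abs_Re_le_cmod abs_Im_le_cmod power2_le_iff_abs_le)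
  have h2: "h^2 \<le> 1" using assms by (simp add: abs_square_le_1)
  have "(Im z)^2*(Im w)^2 \<le> (cmod z)^2*(cmod w)^2" by (rule mult_mono) (use r in auto)
  moreover have "h^4*(Im w)^4 \<le> h^2 * (cmod w)^4"
  proof -
    have "h^4 = h^2 * h^2" "(Im w)^4 = (Im w)^2 * (Im w)^2" "(cmod w)^4 = (cmod w)^2*(cmod w)^2"
      by (simp_all add: power4_eq_xxxx power2_eq_square)
    moreover have "(h^2 * h^2) * ((Im w)^2 * (Im w)^2) \<le> (h^2 * 1) * ((cmod w)^2*(cmod w)^2)"
      by (intro mult_mono) (use r h2 in auto)
    ultimately show ?thesis by simp
  qed
  moreover have "h^2 * (Re w)^2 \<le> h^2 * (cmod w)^2" by (rule mult_left_mono) (use r in auto)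
  moreover have "h^2 * ((Im z)^2*(Im w)^2) \<le> h^2 * ((cmod z)^2*(cmod w)^2)"
    by (rule mult_left_mono) (use calculation in auto)
  ultimately show "evp (z + complex_of_real h * w) + evp (z - complex_of_real h * w) - 2 * evp z
         \<le> h^2 * (2*(cmod w)^2 + 12*(cmod z)^2*(cmod w)^2 + 2*(cmod w)^4)"
    unfolding evp2_eq by (simp add: algebra_simps)
qed

lemma odp2_bound:
  "\<bar>odp (z + complex_of_real h * w) + odp (z - complex_of_real h * w) - 2 * odp z\<bar>
     \<le> h^2 * (12 * cmod z * (cmod w)^2)"
proof -
  have r: "\<bar>Re w\<bar> \<le> cmod w" "\<bar>Im w\<bar> \<le> cmod w" "\<bar>Re z\<bar> \<le> cmod z" "\<bar>Im z\<bar> \<le> cmod z"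
    by (simp_all add: abs_Re_le_cmod abs_Im_le_cmod)
  have iw: "(Im w)^2 \<le> (cmod w)^2" by (simp add: abs_Im_le_cmod power2_le_iff_abs_le)
  have h1: "\<bar>Re z * (Im w)^2\<bar> \<le> cmod z * (cmod w)^2"
  proof -
    have "\<bar>Re z * (Im w)^2\<bar> = \<bar>Re z\<bar> * (Im w)^2" by (simp add: abs_mult)
    also have "\<dots> \<le> cmod z * (cmod w)^2" by (rule mult_mono[OF r(3) iw]) simp_all
    finally show ?thesis .
  qed
  have h2: "\<bar>Re w * Im z * Im w\<bar> \<le> cmod z * (cmod w)^2"
  proof -
    have "\<bar>Re w * Im z * Im w\<bar> = \<bar>Re w\<bar> * \<bar>Im z\<bar> * \<bar>Im w\<bar>" by (simp add: abs_mult)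
    also have "\<dots> \<le> cmod w * cmod z * cmod w"
      by (intro mult_mono r) simp_all
    also have "\<dots> = cmod z * (cmod w)^2" by (simp add: power2_eq_square)
    finally show ?thesis .
  qed
  have e: "2 * Re w * Im z * Im w = 2 * (Re w * Im z * Im w)" by simp
  have "\<bar>Re z * (Im w)^2 + 2 * Re w * Im z * Im w\<bar> \<le> \<bar>Re z * (Im w)^2\<bar> + \<bar>2 * (Re w * Im z * Im w)\<bar>"
    unfolding e by (rule abs_triangle_ineq)
  moreover have "\<bar>2 * (Re w * Im z * Im w)\<bar> = 2 * \<bar>Re w * Im z * Im w\<bar>" by (simp add: abs_mult)
  ultimately have X: "\<bar>Re z * (Im w)^2 + 2 * Re w * Im z * Im w\<bar> \<le> 3 * (cmod z * (cmod w)^2)"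
    using h1 h2 by linarith
  have "\<bar>4*h^2*(Re z * (Im w)^2 + 2 * Re w * Im z * Im w)\<bar> = (4*h^2) * \<bar>Re z * (Im w)^2 + 2 * Re w * Im z * Im w\<bar>"
    by (simp add: abs_mult)
  also have "\<dots> \<le> (4*h^2) * (3 * (cmod z * (cmod w)^2))" by (rule mult_left_mono[OF X]) simp
  also have "\<dots> = h^2 * (12 * cmod z * (cmod w)^2)" by simp
  finally show ?thesis unfolding odp2_eq .
qed

lemma not_differentiable_by_second_diff:
  fixes f :: "real^'n \<Rightarrow> real"
  assumes k: "\<kappa> > 0" and K: "K \<ge> 0"
    and bound: "\<And>h. \<bar>h\<bar> \<le> 1 \<Longrightarrow> \<kappa> * \<bar>h\<bar> - K * h^2 \<le> \<bar>f (x0 + h *\<^sub>R w) + f (x0 + (-h) *\<^sub>R w) - 2 * f x0\<bar>"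
  shows "\<not> f differentiable at x0"
proof
  assume "f differentiable at x0"
  then obtain D where D: "(f has_derivative D) (at x0)" by (auto simp: differentiable_def)
  have l1: "((\<lambda>h::real. x0 + h *\<^sub>R w) has_derivative (\<lambda>h. h *\<^sub>R w)) (at 0)"
    by (auto intro!: derivative_eq_intros)
  have l2: "((\<lambda>h::real. x0 + (-h) *\<^sub>R w) has_derivative (\<lambda>h. (-h) *\<^sub>R w)) (at 0)"
    by (auto intro!: derivative_eq_intros)
  have D1: "(f has_derivative D) (at (x0 + 0 *\<^sub>R w))" using D by simp
  have D2: "(f has_derivative D) (at (x0 + (-0) *\<^sub>R w))" using D by simp
  have c1: "((\<lambda>h. f (x0 + h *\<^sub>R w)) has_derivative (\<lambda>h. D (h *\<^sub>R w))) (at 0)"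
    using has_derivative_compose[OF l1 D1] .
  have c2: "((\<lambda>h. f (x0 + (-h) *\<^sub>R w)) has_derivative (\<lambda>h. D ((-h) *\<^sub>R w))) (at 0)"
    using has_derivative_compose[OF l2 D2] .
  have lin: "linear D" using D has_derivative_linear by blast
  have "((\<lambda>h. f (x0 + h *\<^sub>R w) + f (x0 + (-h) *\<^sub>R w)) has_derivative
        (\<lambda>h. D (h *\<^sub>R w) + D ((-h) *\<^sub>R w))) (at 0)"
    using has_derivative_add[OF c1 c2] .
  moreover have "(\<lambda>h. D (h *\<^sub>R w) + D ((-h) *\<^sub>R w)) = (\<lambda>h. 0)"
  proof
    fix h :: real
    have "D ((-h) *\<^sub>R w) = - D (h *\<^sub>R w)"
      using linear_neg[OF lin, of "h *\<^sub>R w"] by simp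
    then show "D (h *\<^sub>R w) + D ((-h) *\<^sub>R w) = 0" by simp
  qed
  ultimately have g: "((\<lambda>h. f (x0 + h *\<^sub>R w) + f (x0 + (-h) *\<^sub>R w)) has_derivative (\<lambda>h. 0)) (at 0)"
    by simp
  define \<Delta> where "\<Delta> h = f (x0 + h *\<^sub>R w) + f (x0 + (-h) *\<^sub>R w) - 2 * f x0" for h
  have "((\<lambda>h. norm (\<Delta> (0 + h)) / norm h) \<longlongrightarrow> 0) (at 0)"
    using g unfolding has_derivative_at by (simp add: \<Delta>_def)
  from LIM_D[OF this, of "\<kappa>/2"] k
  obtain s where s: "s > 0" "\<And>h. h \<noteq> 0 \<and> norm (h - 0) < s \<Longrightarrow> norm (norm (\<Delta> (0 + h)) / norm h - 0) < \<kappa>/2"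
    by auto
  define q where "q = \<kappa> / (4*K+1)"
  have q: "q > 0" using k K by (simp add: q_def)
  define h where "h = min (s/2) (min (1/2) (q/2))"
  have hh1: "h \<le> s/2" unfolding h_def by (rule min.cobounded1)
  have hh2: "h \<le> 1/2" unfolding h_def by (meson min.cobounded1 min.cobounded2 order_trans)
  have hh3: "h \<le> q/2" unfolding h_def by (meson min.cobounded2 order_trans)
  have hpos: "h > 0" using s(1) q by (simp add: h_def)
  have hs1: "h < s" using hh1 s(1) by linarith
  have hs2: "h \<le> 1" using hh2 by linarith
  have "h < q" using hh3 q by linarith
  then have hs3: "h < \<kappa> / (4*K+1)" by (simp add: q_def)
  note hs = hs1 hs2 hs3
  have "\<bar>\<Delta> h\<bar> / h < \<kappa>/2" using s(2)[of h] hpos hs(1) by simp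
  then have lt: "\<bar>\<Delta> h\<bar> < \<kappa>/2 * h" using hpos by (simp add: divide_less_eq)
  have "\<kappa> * \<bar>h\<bar> - K * h^2 \<le> \<bar>\<Delta> h\<bar>" unfolding \<Delta>_def by (rule bound) (use hs(2) hpos in simp)
  then have "\<kappa> * h - K * h^2 \<le> \<bar>\<Delta> h\<bar>" using hpos by simp
  moreover have "K * h^2 \<le> \<kappa>/4 * h"
  proof -
    have c0: "0 < 4*K+1" using K by simp
    have "h * (4*K+1) < \<kappa>" using hs(3) by (subst (asm) pos_less_divide_eq[OF c0])
    then have "4*K*h \<le> \<kappa>" using hpos by (simp add: algebra_simps)
    then have "4*K*h*h \<le> \<kappa>*h" by (rule mult_right_mono) (use hpos in simp)
    moreover have "K*h^2 = (4*K*h*h)/4" by (simp add: power2_eq_square)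
    ultimately show ?thesis by linarith
  qed
  ultimately show False using lt hpos k by linarith
qed

lemma ys_lin:
  "ys t (z + complex_of_real h * w) = ys t z + complex_of_real h * ys t w"
  "ys t (z - complex_of_real h * w) = ys t z - complex_of_real h * ys t w"
  by (simp_all add: ys_def algebra_simps)

lemma abs_second: "- \<bar>A + B - 2*C\<bar> \<le> \<bar>A\<bar> + \<bar>B\<bar> - 2*\<bar>C::real\<bar>"
  by arith

lemma r_bounds:
  fixes r c :: real
  assumes "0 \<le> r" "r \<le> 1" "0 \<le> c"
  shows "2*r^2 + 12*(r*c)^2*r^2 + 2*r^4 \<le> (4 + 12*c^2)*r"
    and "12*(r*c)*r^2 \<le> 12*c*r"
proof -
  have r2: "r^2 \<le> r" using assms by (simp add: power2_eq_square mult_left_le)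
  have r4: "r^4 \<le> r"
  proof -
    have "r^4 = r^2 * r^2" by (simp add: power4_eq_xxxx power2_eq_square)
    also have "\<dots> \<le> r * 1" by (rule mult_mono) (use r2 assms in \<open>auto simp: power_le_one\<close>)
    finally show ?thesis by simp
  qed
  have "(r*c)^2*r^2 = c^2 * r^4" by (simp add: power2_eq_square power4_eq_xxxx)
  also have "\<dots> \<le> c^2 * r" by (rule mult_left_mono[OF r4]) simp
  finally have "(r*c)^2*r^2 \<le> c^2 * r" .
  then show "2*r^2 + 12*(r*c)^2*r^2 + 2*r^4 \<le> (4 + 12*c^2)*r" using r2 r4 by (simp add: algebra_simps)
  have "(r*c)*r^2 = c * (r * r^2)" by (simp add: algebra_simps)
  also have "\<dots> \<le> c * (r * 1)"
    by (intro mult_left_mono) (use assms in \<open>auto simp: power_le_one\<close>)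
  finally show "12*(r*c)*r^2 \<le> 12*c*r" by simp
qed

lemma rho_pow: "0 \<le> rho^t" "rho^t \<le> 1"
  by (simp_all add: rho_def power_le_one)

locale kink =
  fixes z0 :: complex and k0 :: nat
  assumes k0: "k0 > 0" and re0: "Re (om^k0 * z0) = 0" and im0: "Im (om^k0 * z0) \<noteq> 0"
begin

definition "w0 = cnj (om^k0)"
definition "\<kappa> = 4 * rho^k0 * (rho^k0 * Im (om^k0 * z0))^2"
definition "K0 = 4 + 12 * (cmod z0)^2 + 12 * cmod z0"

lemma kappa_pos: "\<kappa> > 0"
  using im0 by (simp add: \<kappa>_def rho_def)

lemma K0_nonneg: "K0 \<ge> 0" by (simp add: K0_def)

lemma cmod_w0: "cmod w0 = 1" by (simp add: w0_def norm_power cmod_om)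

lemma W_k0: "ys k0 w0 = complex_of_real (rho^k0)"
proof -
  have "om^k0 * cnj (om^k0) = complex_of_real ((cmod (om^k0))^2)"
    by (rule complex_norm_square[symmetric])
  then have "om^k0 * cnj (om^k0) = 1" by (simp add: norm_power cmod_om)
  then show ?thesis by (simp add: ys_def w0_def mult.assoc)
qed

lemma Y_k0: "ys k0 z0 = complex_of_real (rho^k0) * (om^k0 * z0)"
  by (simp add: ys_def mult.assoc)

definition "E2 t h = evp (ys t z0 + complex_of_real h * ys t w0) + evp (ys t z0 - complex_of_real h * ys t w0) - 2 * evp (ys t z0)"
definition "O2 t h = odp (ys t z0 + complex_of_real h * ys t w0) + odp (ys t z0 - complex_of_real h * ys t w0) - 2 * odp (ys t z0)"
definition "A2 t h = \<bar>odp (ys t z0 + complex_of_real h * ys t w0)\<bar> + \<bar>odp (ys t z0 - complex_of_real h * ys t w0)\<bar> - 2 * \<bar>odp (ys t z0)\<bar>"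

lemma E2_bounds:
  assumes "\<bar>h\<bar> \<le> 1"
  shows "0 \<le> E2 t h" "E2 t h \<le> h^2 * ((4 + 12*(cmod z0)^2) * rho^t)"
proof -
  show "0 \<le> E2 t h" unfolding E2_def by (rule evp2_bounds(1)[OF assms])
  have "E2 t h \<le> h^2 * (2*(cmod (ys t w0))^2 + 12*(cmod (ys t z0))^2*(cmod (ys t w0))^2 + 2*(cmod (ys t w0))^4)"
    unfolding E2_def by (rule evp2_bounds(2)[OF assms])
  also have "\<dots> = h^2 * (2*(rho^t)^2 + 12*(rho^t * cmod z0)^2*(rho^t)^2 + 2*(rho^t)^4)"
    by (simp add: cmod_ys cmod_w0)
  also have "\<dots> \<le> h^2 * ((4 + 12*(cmod z0)^2) * rho^t)"
    by (rule mult_left_mono[OF r_bounds(1)]) (simp_all add: rho_pow)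
  finally show "E2 t h \<le> h^2 * ((4 + 12*(cmod z0)^2) * rho^t)" .
qed

lemma O2_bound: "\<bar>O2 t h\<bar> \<le> h^2 * (12 * cmod z0 * rho^t)"
proof -
  have "\<bar>O2 t h\<bar> \<le> h^2 * (12 * cmod (ys t z0) * (cmod (ys t w0))^2)"
    unfolding O2_def by (rule odp2_bound)
  also have "\<dots> = h^2 * (12 * (rho^t * cmod z0) * (rho^t)^2)"
    by (simp add: cmod_ys cmod_w0)
  also have "\<dots> \<le> h^2 * (12 * cmod z0 * rho^t)"
    by (rule mult_left_mono[OF r_bounds(2)]) (simp_all add: rho_pow)
  finally show ?thesis .
qed

lemma A2_k0: "A2 k0 h = \<kappa> * \<bar>h\<bar>"
proof -
  define v where "v = Im (om^k0 * z0)"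
  define r where "r = rho^k0"
  have Y: "ys k0 z0 = Complex 0 (r * v)" using re0 by (simp add: Y_k0 r_def v_def complex_eq_iff)
  have W: "ys k0 w0 = Complex r 0" by (simp add: W_k0 r_def complex_eq_iff)
  have "A2 k0 h = \<bar>2 * (h*r) * (r * v)^2\<bar> + \<bar>2 * (-(h*r)) * (r * v)^2\<bar> - 0"
    unfolding A2_def Y W by (simp add: odp_def)
  also have "\<dots> = 4 * r * (r * v)^2 * \<bar>h\<bar>"
    by (simp add: abs_mult r_def rho_def)
  finally show ?thesis by (simp add: \<kappa>_def r_def v_def)
qed

lemma gW_diff:
  "gW t (z0 + complex_of_real h * w0) + gW t (z0 - complex_of_real h * w0) - 2 * gW t z0
   = E2 t h + (if t = 0 then O2 t h else A2 t h)"
  by (simp add: gW_def E2_def O2_def A2_def ys_lin)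

lemma gO_diff:
  "gO t (z0 + complex_of_real h * w0) + gO t (z0 - complex_of_real h * w0) - 2 * gO t z0
   = E2 t h + (if t = 0 then O2 t h else - A2 t h)"
  by (simp add: gO_def E2_def O2_def A2_def ys_lin)

lemma K0_split: "(4 + 12*(cmod z0)^2) * rho^t + 12 * cmod z0 * rho^t = K0 * rho^t"
  by (simp add: K0_def algebra_simps)

lemma gW_term:
  assumes "\<bar>h\<bar> \<le> 1"
  shows "(if t = k0 then \<kappa> * \<bar>h\<bar> else 0) - h^2 * (K0 * rho^t)
     \<le> gW t (z0 + complex_of_real h * w0) + gW t (z0 - complex_of_real h * w0) - 2 * gW t z0"
proof -
  have e: "0 \<le> E2 t h" using E2_bounds[OF assms] by simp
  have o: "- (h^2 * (12 * cmod z0 * rho^t)) \<le> O2 t h" using O2_bound[of t h] by linarith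
  have a: "- (h^2 * (12 * cmod z0 * rho^t)) \<le> A2 t h"
    using abs_second O2_bound[of t h] unfolding A2_def O2_def by (smt (verit))
  have nn: "0 \<le> h^2 * (K0 * rho^t)" using K0_nonneg rho_pow by simp
  have "12*cmod z0 \<le> K0" by (simp add: K0_def)
  then have "12 * cmod z0 * rho^t \<le> K0 * rho^t" by (rule mult_right_mono) (simp add: rho_pow)
  then have le: "h^2 * (12 * cmod z0 * rho^t) \<le> h^2 * (K0 * rho^t)"
    by (rule mult_left_mono) simp
  show ?thesis
  proof (cases "t = k0")
    case True
    then have "t \<noteq> 0" using k0 by simp
    then show ?thesis using True e nn by (simp add: gW_diff A2_k0)
  next
    case False
    then show ?thesis using e o a le by (auto simp: gW_diff)
  qed
qed

lemma gO_term:
  assumes "\<bar>h\<bar> \<le> 1"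
  shows "gO t (z0 + complex_of_real h * w0) + gO t (z0 - complex_of_real h * w0) - 2 * gO t z0
     \<le> - (if t = k0 then \<kappa> * \<bar>h\<bar> else 0) + h^2 * (K0 * rho^t)"
proof -
  have e: "E2 t h \<le> h^2 * ((4 + 12*(cmod z0)^2) * rho^t)" using E2_bounds[OF assms] by simp
  have o: "O2 t h \<le> h^2 * (12 * cmod z0 * rho^t)" using O2_bound[of t h] by linarith
  have a: "- A2 t h \<le> h^2 * (12 * cmod z0 * rho^t)"
    using abs_second O2_bound[of t h] unfolding A2_def O2_def by (smt (verit))
  have s: "h^2 * ((4 + 12*(cmod z0)^2) * rho^t) + h^2 * (12 * cmod z0 * rho^t) = h^2 * (K0 * rho^t)"
    by (simp only: distrib_left[symmetric] K0_split)
  have nn: "0 \<le> h^2 * (12 * cmod z0 * rho^t)" using rho_pow by simp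
  show ?thesis
  proof (cases "t = k0")
    case True
    then have "t \<noteq> 0" using k0 by simp
    then have eq: "gO t (z0 + complex_of_real h * w0) + gO t (z0 - complex_of_real h * w0) - 2 * gO t z0
      = E2 t h - \<kappa> * \<bar>h\<bar>" using True by (simp add: gO_diff A2_k0)
    have i: "(if t = k0 then \<kappa> * \<bar>h\<bar> else 0) = \<kappa> * \<bar>h\<bar>" using True by simp
    show ?thesis unfolding eq i using e nn s by linarith
  next
    case False
    then show ?thesis using e o a s by (auto simp: gO_diff)
  qed
qed

end

lemma rho_sums: "(\<lambda>t. rho^t) sums 2"
proof -
  have "(\<lambda>t. rho^t) sums (1 / (1 - rho))" by (rule geometric_sums) (simp add: rho_def)
  then show ?thesis by (simp add: rho_def)
qed

lemma second_sum:
  fixes f g k :: "nat \<Rightarrow> real"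
  assumes "summable f" "summable g" "summable k"
  shows "suminf f + suminf g - 2 * suminf k = (\<Sum>t. f t + g t - 2 * k t)"
    and "summable (\<lambda>t. f t + g t - 2 * k t)"
proof -
  have "summable (\<lambda>t. 2 * k t)" using assms(3) by (rule summable_mult)
  moreover have "2 * suminf k = (\<Sum>t. 2 * k t)" using assms(3) by (rule suminf_mult[symmetric])
  ultimately show "suminf f + suminf g - 2 * suminf k = (\<Sum>t. f t + g t - 2 * k t)"
    "summable (\<lambda>t. f t + g t - 2 * k t)"
    using assms by (simp_all add: suminf_add suminf_diff summable_add summable_diff)
qed

context kink begin

lemma lb_sums:
  "(\<lambda>t. (if t = k0 then \<kappa> * \<bar>h\<bar> else 0) - h^2 * (K0 * rho^t)) sums (\<kappa> * \<bar>h\<bar> - h^2 * (K0 * 2))"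
proof -
  have "(\<lambda>t. h^2 * (K0 * rho^t)) sums (h^2 * (K0 * 2))"
    by (intro sums_mult rho_sums)
  moreover have "(\<lambda>t. if t = k0 then \<kappa> * \<bar>h\<bar> else 0) sums (\<kappa> * \<bar>h\<bar>)"
    using sums_single[of k0 "\<lambda>_. \<kappa> * \<bar>h\<bar>"] by simp
  ultimately show ?thesis by (intro sums_diff)
qed

lemma ub_sums:
  "(\<lambda>t. - (if t = k0 then \<kappa> * \<bar>h\<bar> else 0) + h^2 * (K0 * rho^t)) sums (- (\<kappa> * \<bar>h\<bar>) + h^2 * (K0 * 2))"
proof -
  have "(\<lambda>t. h^2 * (K0 * rho^t)) sums (h^2 * (K0 * 2))"
    by (intro sums_mult rho_sums)
  moreover have "(\<lambda>t. if t = k0 then \<kappa> * \<bar>h\<bar> else 0) sums (\<kappa> * \<bar>h\<bar>)"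
    using sums_single[of k0 "\<lambda>_. \<kappa> * \<bar>h\<bar>"] by simp
  ultimately show ?thesis by (intro sums_add sums_minus)
qed

lemma FW_second:
  assumes "\<bar>h\<bar> \<le> 1"
  shows "\<kappa> * \<bar>h\<bar> - (2*K0) * h^2 \<le> FW (z0 + complex_of_real h * w0) + FW (z0 - complex_of_real h * w0) - 2 * FW z0"
proof -
  note ss = second_sum[OF summable_gW summable_gW summable_gW, of "z0 + complex_of_real h * w0" "z0 - complex_of_real h * w0" z0]
  have "\<kappa> * \<bar>h\<bar> - h^2 * (K0 * 2) \<le> (\<Sum>t. gW t (z0 + complex_of_real h * w0) + gW t (z0 - complex_of_real h * w0) - 2 * gW t z0)"
    by (rule sums_le[OF gW_term[OF assms] lb_sums summable_sums[OF ss(2)]])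
  then show ?thesis unfolding FW_def ss(1) by (simp add: algebra_simps)
qed

lemma FO_second:
  assumes "\<bar>h\<bar> \<le> 1"
  shows "FO (z0 + complex_of_real h * w0) + FO (z0 - complex_of_real h * w0) - 2 * FO z0 \<le> - (\<kappa> * \<bar>h\<bar>) + (2*K0) * h^2"
proof -
  note ss = second_sum[OF summable_gO summable_gO summable_gO, of "z0 + complex_of_real h * w0" "z0 - complex_of_real h * w0" z0]
  have "(\<Sum>t. gO t (z0 + complex_of_real h * w0) + gO t (z0 - complex_of_real h * w0) - 2 * gO t z0) \<le> - (\<kappa> * \<bar>h\<bar>) + h^2 * (K0 * 2)"
    by (rule sums_le[OF gO_term[OF assms] summable_sums[OF ss(2)] ub_sums])
  then show ?thesis unfolding FO_def ss(1) by (simp add: algebra_simps)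
qed

end

lemma PP_line:
  assumes "a \<noteq> b"
  shows "PP a b (x0 + h *\<^sub>R emb a b w) = PP a b x0 + complex_of_real h * w"
    and "PP a b (x0 + (-h) *\<^sub>R emb a b w) = PP a b x0 - complex_of_real h * w"
  by (simp_all add: PP_add PP_diff PP_scale PP_emb[OF assms])

lemma nondiff_FW:
  fixes x0 :: "real^'n"
  assumes ab: "a \<noteq> b" and kk: "kink (PP a b x0) k0"
  shows "\<not> (\<lambda>y. FW (PP a b y)) differentiable at x0"
proof -
  interpret kink "PP a b x0" k0 by (rule kk)
  show ?thesis
  proof (rule not_differentiable_by_second_diff[where w = "emb a b w0"])
    show "\<kappa> > 0" by (rule kappa_pos)
    show "2*K0 \<ge> 0" using K0_nonneg by simp
    fix h :: real assume h: "\<bar>h\<bar> \<le> 1"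
    have neg_h: "PP a b x0 + complex_of_real (-h) * w0 = PP a b x0 - complex_of_real h * w0" by simp
    show "\<kappa> * \<bar>h\<bar> - 2*K0 * h^2 \<le> \<bar>FW (PP a b (x0 + h *\<^sub>R emb a b w0)) + FW (PP a b (x0 + (-h) *\<^sub>R emb a b w0)) - 2 * FW (PP a b x0)\<bar>"
      unfolding PP_line(1)[OF ab] neg_h using FW_second[OF h] by linarith
  qed
qed

lemma nondiff_FO:
  fixes x0 :: "real^'n"
  assumes ab: "a \<noteq> b" and kk: "kink (PP a b x0) k0"
  shows "\<not> (\<lambda>y. FO (PP a b y)) differentiable at x0"
proof -
  interpret kink "PP a b x0" k0 by (rule kk)
  show ?thesis
  proof (rule not_differentiable_by_second_diff[where w = "emb a b w0"])
    show "\<kappa> > 0" by (rule kappa_pos)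
    show "2*K0 \<ge> 0" using K0_nonneg by simp
    fix h :: real assume h: "\<bar>h\<bar> \<le> 1"
    have neg_h: "PP a b x0 + complex_of_real (-h) * w0 = PP a b x0 - complex_of_real h * w0" by simp
    show "\<kappa> * \<bar>h\<bar> - 2*K0 * h^2 \<le> \<bar>FO (PP a b (x0 + h *\<^sub>R emb a b w0)) + FO (PP a b (x0 + (-h) *\<^sub>R emb a b w0)) - 2 * FO (PP a b x0)\<bar>"
      unfolding PP_line(1)[OF ab] neg_h using FO_second[OF h] by linarith
  qed
qed

fun gab :: "nat \<Rightarrow> int \<times> int" where
  "gab 0 = (1, 0)"
| "gab (Suc n) = (3 * fst (gab n) - 4 * snd (gab n), 4 * fst (gab n) + 3 * snd (gab n))"

lemma gab_pow: "(Complex 3 4)^n = Complex (of_int (fst (gab n))) (of_int (snd (gab n)))"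
proof (induction n)
  case 0 then show ?case by (simp add: complex_eq_iff)
next
  case (Suc n)
  have "(Complex 3 4)^(Suc n) = Complex 3 4 * (Complex 3 4)^n" by simp
  also have "\<dots> = Complex 3 4 * Complex (of_int (fst (gab n))) (of_int (snd (gab n)))" using Suc by simp
  finally show ?case by (simp add: complex_eq_iff algebra_simps)
qed

lemma gab_mod: "n \<ge> 1 \<Longrightarrow> \<exists>u v. gab n = (5*u+3, 5* v+4)"
proof (induction n rule: dec_induct)
  case base then show ?case by simp
next
  case (step n)
  then obtain u v where "gab n = (5*u+3, 5* v+4)" by blast
  then have "gab (Suc n) = (5*(3*u-4* v-2)+3, 5*(4*u+3* v+4)+4)" by (simp add: algebra_simps)
  then show ?case by blast
qed

lemma om_pow_ne_1:
  assumes "n \<ge> 1" shows "om^n \<noteq> 1"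
proof
  assume "om^n = 1"
  then have "(5 * om)^n = 5^n" by (simp add: power_mult_distrib)
  moreover have "5 * om = Complex 3 4" by (simp add: om_def complex_eq_iff)
  ultimately have "Complex (of_int (fst (gab n))) (of_int (snd (gab n))) = 5^n"
    using gab_pow by simp
  then have "Re (Complex (of_int (fst (gab n))) (of_int (snd (gab n)))) = Re (5^n)" by simp
  then have "(of_int (fst (gab n)) :: real) = 5^n" by (simp add: Re_power_real)
  then have e: "fst (gab n) = 5^n" by (metis of_int_eq_iff of_int_numeral of_int_power)
  obtain u v where "gab n = (5*u+3, 5* v+4)" using gab_mod[OF assms] by blast
  with e have "5*u + 3 = 5 * (5::int)^(n-1)" using assms
    by (metis fst_conv power_eq_if not_one_le_zero)
  then show False by presburger
qed

lemma om_ne0: "om \<noteq> 0" by (simp add: om_def complex_eq_iff)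

lemma om_cis: "om = cis (Arg om)"
  using cis_Arg[OF om_ne0] by (simp add: sgn_div_norm cmod_om)

lemma theta_irrational: "Arg om / (2*pi) \<notin> \<rat>"
proof
  assume "Arg om / (2*pi) \<in> \<rat>"
  then obtain p q :: int where q: "q > 0" and pq: "Arg om / (2*pi) = of_int p / of_int q"
    by (rule Rats_cases') blast
  have "Arg om = 2*pi * of_int p / of_int q" using pq by (simp add: field_simps)
  then have "real (nat q) * Arg om = 2 * pi * of_int p" using q by simp
  moreover have "om^(nat q) = (cis (Arg om))^(nat q)"
    by (rule arg_cong[where f="\<lambda>w. w^(nat q)", OF om_cis])
  moreover have "(cis (Arg om))^(nat q) = cis (real (nat q) * Arg om)" by (rule Complex.DeMoivre)
  ultimately have "om^(nat q) = cis (2 * pi * of_int p)" by simp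
  then have "om^(nat q) = 1" using cis_multiple_2pi[of "of_int p"] by simp
  moreover have "nat q \<ge> 1" using q by simp
  ultimately show False using om_pow_ne_1 by blast
qed

lemma cis_sub_one: "cmod (cis x - 1) \<le> \<bar>x\<bar>"
proof -
  have "(cmod (cis x - 1))^2 = (cos x - 1)^2 + (sin x)^2" by (simp add: cmod_power2)
  also have "\<dots> = 2 - 2 * cos x" by (simp add: power2_eq_square algebra_simps sin_squared_eq)
  also have "\<dots> = 4 * (sin (x/2))^2" using cos_double_sin[of "x/2"] by simp
  also have "\<dots> \<le> 4 * (x/2)^2"
  proof -
    have "(sin (x/2))^2 \<le> (x/2)^2" using abs_sin_x_le_abs_x[of "x/2"] abs_le_square_iff by blast
    then show ?thesis by simp
  qed
  also have "\<dots> = x^2" by (simp add: power2_eq_square)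
  finally show ?thesis using abs_le_square_iff[of "cmod (cis x - 1)" x] by simp
qed

lemma dense_kink:
  assumes z: "z \<noteq> 0" and d: "\<delta> > 0"
  shows "\<exists>z' k0. kink z' k0 \<and> cmod (z' - z) < \<delta>"
proof -
  define \<alpha>0 where "\<alpha>0 = Arg om"
  define \<phi> where "\<phi> = Arg z"
  define c where "c = cmod z"
  have c: "c > 0" using z by (simp add: c_def)
  define \<epsilon> where "\<epsilon> = \<delta> / (2*pi*c)"
  have eps: "\<epsilon> > 0" using d c by (simp add: \<epsilon>_def)
  obtain h k :: int where k: "k > 0" and hk: "\<bar>of_int k * (\<alpha>0/(2*pi)) - of_int h - (pi/2 - \<phi>)/(2*pi)\<bar> < \<epsilon>"
    using sequence_of_fractional_parts_is_dense[OF theta_irrational eps] unfolding \<alpha>0_def by blast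
  define e where "e = of_int k * \<alpha>0 - 2*pi* of_int h - pi/2 + \<phi>"
  have "e = 2*pi * (of_int k * (\<alpha>0/(2*pi)) - of_int h - (pi/2 - \<phi>)/(2*pi))"
    by (simp add: e_def field_simps)
  then have e_bound: "\<bar>e\<bar> < 2*pi*\<epsilon>" using hk by (simp add: abs_mult)
  define k0 where "k0 = nat k"
  have rk: "real k0 = of_int k" using k by (simp add: k0_def)
  define z' where "z' = complex_of_real c * cis (pi/2 - of_int k * \<alpha>0)"
  have "om^k0 = (cis \<alpha>0)^k0"
    unfolding \<alpha>0_def by (rule arg_cong[where f="\<lambda>w. w^k0", OF om_cis])
  moreover have "(cis \<alpha>0)^k0 = cis (real k0 * \<alpha>0)" by (rule Complex.DeMoivre)
  ultimately have omk: "om^k0 = cis (of_int k * \<alpha>0)" by (simp add: rk)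
  have "om^k0 * z' = complex_of_real c * (cis (of_int k * \<alpha>0) * cis (pi/2 - of_int k * \<alpha>0))"
    by (simp add: z'_def omk)
  also have "\<dots> = complex_of_real c * \<i>" by (simp add: cis_mult)
  finally have pz: "om^k0 * z' = complex_of_real c * \<i>" .
  have kk: "kink z' k0"
    by unfold_locales (use k c pz in \<open>simp_all add: k0_def\<close>)
  have zc: "z = complex_of_real c * cis \<phi>"
  proof -
    have "cis \<phi> = z /\<^sub>R c" using cis_Arg[OF z] by (simp add: \<phi>_def c_def sgn_div_norm)
    then have "complex_of_real c * cis \<phi> = c *\<^sub>R (z /\<^sub>R c)" by (simp add: scaleR_conv_of_real)
    also have "\<dots> = z" using c by simp
    finally show ?thesis by simp
  qed
  have "pi/2 - of_int k * \<alpha>0 = (\<phi> - e) + 2*pi* of_int (-h)" by (simp add: e_def)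
  then have "cis (pi/2 - of_int k * \<alpha>0) = cis (\<phi> - e) * cis (2*pi* of_int (-h))"
    by (simp add: cis_mult)
  also have "cis (2*pi* of_int (-h)) = 1" by (rule cis_multiple_2pi) simp
  finally have "cis (pi/2 - of_int k * \<alpha>0) = cis \<phi> * cis (-e)" by (simp add: cis_mult)
  then have "z' - z = complex_of_real c * cis \<phi> * (cis (-e) - 1)"
    by (simp add: z'_def zc algebra_simps)
  then have "cmod (z' - z) = c * cmod (cis (-e) - 1)" using c by (simp add: norm_mult)
  also have "\<dots> \<le> c * \<bar>e\<bar>" using cis_sub_one[of "-e"] c by (simp add: mult_left_mono)
  also have "\<dots> < c * (2*pi*\<epsilon>)" using e_bound c by simp
  also have "\<dots> = \<delta>" using c by (simp add: \<epsilon>_def)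
  finally show ?thesis using kk by blast
qed

lemma dense_kink_all:
  assumes d: "\<delta> > 0"
  shows "\<exists>z' k0. kink z' k0 \<and> cmod (z' - z) < \<delta>"
proof (cases "z = 0")
  case False then show ?thesis using dense_kink[OF False d] by blast
next
  case True
  have "complex_of_real (\<delta>/2) \<noteq> 0" using d by simp
  from dense_kink[OF this, of "\<delta>/2"] d obtain z' k0 where
    "kink z' k0" "cmod (z' - complex_of_real (\<delta>/2)) < \<delta>/2" by auto
  moreover have "cmod (z' - z) \<le> cmod (z' - complex_of_real (\<delta>/2)) + \<delta>/2"
    using True norm_triangle_ineq[of "z' - complex_of_real (\<delta>/2)" "complex_of_real (\<delta>/2)"] d by simp
  ultimately show ?thesis by force
qed

lemma closure_kinks:
  fixes a b :: "'n::finite"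
  assumes ab: "a \<noteq> b"
  shows "closure {x::real^'n. \<exists>k0. kink (PP a b x) k0} = UNIV"
proof -
  have "x \<in> closure {x::real^'n. \<exists>k0. kink (PP a b x) k0}" for x
    unfolding closure_approachable
  proof (intro allI impI)
    fix e :: real assume e: "e > 0"
    obtain z' k0 where kz: "kink z' k0" "cmod (z' - PP a b x) < e"
      using dense_kink_all[OF e] by blast
    define x' where "x' = x + emb a b (z' - PP a b x)"
    have "PP a b x' = z'" by (simp add: x'_def PP_add PP_emb[OF ab])
    moreover have "dist x' x = cmod (z' - PP a b x)" by (simp add: x'_def dist_norm norm_emb[OF ab])
    ultimately show "\<exists>y\<in>{x. \<exists>k0. kink (PP a b x) k0}. dist y x < e" using kz by auto
  qed
  then show ?thesis by auto
qed

theorem theorem3: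
  assumes "CARD('n) \<ge> 2"
  shows "\<exists>(m::nat) (A :: nat \<Rightarrow> real^'n^'n) (c :: real^'n \<Rightarrow> real).
     m \<ge> 1 \<and>
     (\<forall>i\<in>{1..m}. \<forall>j k. A i $ j $ k \<in> \<rat>) \<and>
     JSR m A < 1 \<and>
     (\<forall>x. c x \<ge> 0) \<and>
     smooth_fun c \<and>
     (\<exists>U L. open U \<and> 0 \<in> U \<and> L-lipschitz_on U c) \<and>
     (\<forall>x. Jopt m A c x < \<infinity> \<and> Jworst m A c x < \<infinity>) \<and>
     (\<exists>S. closure S = UNIV \<and> (\<forall>x\<in>S. \<not> ((\<lambda>y. enn2real (Jopt m A c y)) differentiable at x))) \<and>
     (\<exists>S. closure S = UNIV \<and> (\<forall>x\<in>S. \<not> ((\<lambda>y. enn2real (Jworst m A c y)) differentiable at x)))"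
proof -
  obtain a :: 'n where True by blast
  have "\<exists>b::'n. b \<noteq> a"
  proof (rule ccontr)
    assume "\<not> (\<exists>b::'n. b \<noteq> a)"
    then have h: "(UNIV :: 'n set) = {a}" by auto
    have "CARD('n) = 1" by (subst h) simp
    then show False using assms by simp
  qed
  then obtain b :: 'n where ab: "a \<noteq> b" by (auto simp: eq_commute)
  let ?A = "Amat a b" and ?c = "ccost a b"
  have rat: "\<forall>i\<in>{1..2::nat}. \<forall>j k. ?A i $ j $ k \<in> \<rat>"
    by (auto simp: Amat_def sgi_def)
  have fin: "\<forall>x. Jopt 2 ?A ?c x < \<infinity> \<and> Jworst 2 ?A ?c x < \<infinity>"
    by (simp add: Jopt_eq[OF ab] Jworst_eq[OF ab])
  have eqO: "(\<lambda>y. enn2real (Jopt 2 ?A ?c y)) = (\<lambda>y. FO (PP a b y))"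
    by (simp add: Jopt_eq[OF ab] FO_nonneg)
  have eqW: "(\<lambda>y. enn2real (Jworst 2 ?A ?c y)) = (\<lambda>y. FW (PP a b y))"
    by (simp add: Jworst_eq[OF ab] FW_nonneg)
  let ?S = "{x::real^'n. \<exists>k0. kink (PP a b x) k0}"
  have dO: "\<exists>S. closure S = UNIV \<and> (\<forall>x\<in>S. \<not> ((\<lambda>y. enn2real (Jopt 2 ?A ?c y)) differentiable at x))"
    using closure_kinks[OF ab] nondiff_FO[OF ab] unfolding eqO by blast
  have dW: "\<exists>S. closure S = UNIV \<and> (\<forall>x\<in>S. \<not> ((\<lambda>y. enn2real (Jworst 2 ?A ?c y)) differentiable at x))"
    using closure_kinks[OF ab] nondiff_FW[OF ab] unfolding eqW by blast
  have lip: "\<exists>U L. open U \<and> 0 \<in> U \<and> L-lipschitz_on U ?c"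
    using lipschitz_ccost[OF ab] by (intro exI[of _ "ball 0 1"] exI[of _ 12]) auto
  have nn: "\<forall>x. ?c x \<ge> 0" by (simp add: ccost_def)
  show ?thesis
    by (intro exI[of _ 2] exI[of _ ?A] exI[of _ ?c] conjI)
       (simp, fact rat, fact JSR_lt[OF ab], fact nn, fact smooth_ccost[OF ab], fact lip, fact fin, fact dO, fact dW)
qed

end
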